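(* Let $f\in\mathcal{A}$ satisfy $\operatorname{Re}\big((1-z^2)f'(z)\big)>0$ for all $z\in\mathbb{D}$ (i.e. $f\in\mathcal{F}_2$), and let $\gamma_1,\gamma_2,\gamma_3$ be its logarithmic coefficients. Then $$|H_{2,1}(F_f)|=|\gamma_1\gamma_3-\gamma_2^2|\le \tfrac14 .$$ The inequality is sharp: equality holds for $\tilde f(z)=\int_0^z \frac{1+t^2}{(1-t^2)^2}\,dt$, which satisfies $(1-z^2)\tilde f'(z)=\frac{1+z^2}{1-z^2}$ and hence lies in $\mathcal{F}_2$.
   Context: $\mathbb{D}=\{z\in\mathbb{C}:|z|<1\}$. $\mathcal{A}$ denotes the class of analytic functions $f$ on $\mathbb{D}$ of the form $f(z)=z+\sum_{n=2}^\infty a_n z^n$. $\mathcal{F}_2=\{f\in\mathcal{A}:\operatorname{Re}(1-z^2)f'(z)>0,\ z\in\mathbb{D}\}$. For such $f$ the logarithmic coefficients $\gamma_n$ are defined by $\log\frac{f(z)}{z}=2\sum_{n=1}^\infty\gamma_n z^n$ (with $\log1=0$); explicitly $\gamma_1=\tfrac12 a_2$, $\gamma_2=\tfrac12(a_3-\tfrac12 a_2^2)$, $\gamma_3=\tfrac14(a_4-a_2a_3+\tfrac13 a_2^3)$. $H_{2,1}(F_f)=\gamma_1\gamma_3-\gamma_2^2=\tfrac14\big(a_2a_4-a_3^2+\tfrac1{12}a_2^4\big)$. *)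

theory Defs
  imports "HOL-Analysis.Analysis"
begin

definition classA :: "(complex \<Rightarrow> complex) \<Rightarrow> bool" where
  "classA f \<longleftrightarrow> f holomorphic_on ball 0 1 \<and> f 0 = 0 \<and> deriv f 0 = 1"

definition classF2 :: "(complex \<Rightarrow> complex) \<Rightarrow> bool" where
  "classF2 f \<longleftrightarrow> classA f \<and> (\<forall>z\<in>ball 0 1. Re ((1 - z^2) * deriv f z) > 0)"

text \<open>Logarithmic coefficients: log(f(z)/z) = 2 * sum gamma_n z^n, with log 1 = 0.
  The quotient f(z)/z is extended by its value 1 at z = 0; near 0 it is close to 1,
  so the principal logarithm is the branch with log 1 = 0, and Taylor coefficients at 0
  only depend on the function near 0.\<close>
definition logcoeff :: "(complex \<Rightarrow> complex) \<Rightarrow> nat \<Rightarrow> complex" where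
  "logcoeff f n = (deriv ^^ n) (\<lambda>z. Ln (if z = 0 then 1 else f z / z)) 0 / (2 * fact n)"

definition H21 :: "(complex \<Rightarrow> complex) \<Rightarrow> complex" where
  "H21 f = logcoeff f 1 * logcoeff f 3 - (logcoeff f 2)^2"

end

theory Submission
  imports Defs "HOL-Complex_Analysis.Complex_Analysis"
begin


lemma real_ineq:
  fixes x y z :: real
  assumes x0: "0 \<le> x" and x1: "x \<le> 1" and y0: "0 \<le> y" and yt: "y \<le> 1 - x^2"
    and z0: "0 \<le> z" and zb: "z \<le> 1 - x^2 - y^2/(1+x)"
  shows "x*z/2 + x^2*y/9 + 5*x^4/36 + x^2/18 + 4*y^2/9 + 4*y/9 + 1/9 \<le> 1"
proof -
  define t where "t = 1 - x^2"
  define P where "P = (\<lambda>y. 36*(1+x) - (18*x*((1-x^2)*(1+x) - y^2) + (1+x)*(4*x^2*y + 5*x^4 + 2*x^2 + 16*y^2 + 16*y + 4)))"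
  have t0: "0 \<le> t" using x0 x1 unfolding t_def by (simp add: power_le_one)
  have P0: "P 0 = (1+x)*(32 - 18*x + 18*x^3 - 5*x^4 - 2*x^2)" unfolding P_def by (simp add: algebra_simps power2_eq_square power3_eq_cube power4_eq_xxxx)
  have Pt: "P t = (1+x)*(24*x^2 + x^4)" unfolding P_def t_def by (simp add: algebra_simps power2_eq_square power3_eq_cube power4_eq_xxxx)
  have x4: "x^4 \<le> 1" "x^2 \<le> 1" "x^3 \<ge> 0" using x0 x1 by (simp_all add: power_le_one)
  have "32 - 18*x + 18*x^3 - 5*x^4 - 2*x^2 \<ge> 0" using x4 x1 by linarith
  hence P0n: "P 0 \<ge> 0" unfolding P0 using x0 by simp
  have Ptn: "P t \<ge> 0" unfolding Pt using x0 by simp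
  have id: "t * P y = (t-y)*P 0 + y*P t + (16-2*x)*t*y*(t-y)"
    unfolding P_def t_def by (simp add: algebra_simps power2_eq_square power3_eq_cube power4_eq_xxxx)
  have "(t-y)*P 0 \<ge> 0" using P0n yt unfolding t_def by simp
  moreover have "y*P t \<ge> 0" using Ptn y0 by simp
  moreover have "(16-2*x)*t*y*(t-y) \<ge> 0" using x1 t0 y0 yt unfolding t_def by simp
  ultimately have tP: "t * P y \<ge> 0" unfolding id by linarith
  have Py: "P y \<ge> 0"
  proof (cases "t = 0")
    case True then have "y = 0" using y0 yt unfolding t_def by simp
    then show ?thesis using P0n by simp
  next
    case False then have "t > 0" using t0 by simp
    then show ?thesis using tP by (simp add: zero_le_mult_iff)
  qed
  have "x*z \<le> x*(1 - x^2 - y^2/(1+x))" using zb x0 by (simp add: mult_left_mono)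
  also have "\<dots> = (x*((1-x^2)*(1+x) - y^2))/(1+x)" using x0 by (simp add: field_simps)
  finally have xz: "x*z \<le> (x*((1-x^2)*(1+x) - y^2))/(1+x)" .
  define S where "S = x^2*y/9 + 5*x^4/36 + x^2/18 + 4*y^2/9 + 4*y/9 + 1/9"
  define K where "K = x*((1-x^2)*(1+x) - y^2)"
  have "36*(1+x)*S + 18*K \<le> 36*(1+x)"
  proof -
    have "36*S = 4*x^2*y + 5*x^4 + 2*x^2 + 16*y^2 + 16*y + 4" unfolding S_def by (simp add: field_simps)
    hence "36*(1+x)*S = (1+x)*(4*x^2*y + 5*x^4 + 2*x^2 + 16*y^2 + 16*y + 4)" by (metis mult.commute mult.left_commute)
    thus ?thesis using Py unfolding P_def K_def by linarith
  qed
  hence "(36*(1+x)*S + 18*K) / (36*(1+x)) \<le> 1" using x0 by simp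
  moreover have "(36*(1+x)*S + 18*K) / (36*(1+x)) = K/(1+x)/2 + S" using x0 by (simp add: field_simps)
  ultimately have "K/(1+x)/2 + S \<le> 1" by simp
  hence "(x*((1-x^2)*(1+x) - y^2))/(1+x)/2 + (x^2*y/9 + 5*x^4/36 + x^2/18 + 4*y^2/9 + 4*y/9 + 1/9) \<le> 1"
    unfolding S_def K_def .
  moreover have "x*z/2 \<le> (x*((1-x^2)*(1+x) - y^2))/(1+x)/2" using xz by (simp only: divide_right_mono)
  ultimately show ?thesis by linarith
qed


lemma mobius_identity:
  fixes a g :: complex
  shows "norm (1 - cnj a * g)^2 - norm (g - a)^2 = (1 - norm a^2) * (1 - norm g^2)"
proof -
  have "complex_of_real (norm (1 - cnj a * g)^2 - norm (g - a)^2) =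
        (1 - cnj a * g) * cnj (1 - cnj a * g) - (g - a) * cnj (g - a)"
    by (simp only: of_real_diff complex_norm_square)
  also have "\<dots> = (1 - a * cnj a) * (1 - g * cnj g)" by (simp add: algebra_simps)
  also have "\<dots> = complex_of_real ((1 - norm a^2) * (1 - norm g^2))"
  proof -
    have "a * cnj a = of_real (norm a^2)" "g * cnj g = of_real (norm g^2)" by (simp_all only: complex_norm_square)
    thus ?thesis by simp
  qed
  finally show ?thesis using of_real_eq_iff by blast
qed

lemma mobius_norm:
  fixes a g :: complex
  assumes "norm a < 1" "norm g < 1"
  shows "norm ((g - a) / (1 - cnj a * g)) < 1"
proof -
  have "norm (cnj a * g) \<le> norm a" using assms by (simp add: norm_mult mult_left_le)
  hence "norm (cnj a * g) < 1" using assms by linarith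
  hence d: "1 - cnj a * g \<noteq> 0" by auto
  have "(1 - norm a^2) * (1 - norm g^2) > 0" using assms
    by (simp add: power_less_one_iff abs_square_less_1)
  hence "norm (g - a)^2 < norm (1 - cnj a * g)^2" using mobius_identity[of a g] by linarith
  hence "norm (g - a) < norm (1 - cnj a * g)" using power2_less_imp_less by fastforce
  thus ?thesis using d by (simp add: norm_divide divide_less_eq)
qed

lemma bounded_dichotomy:
  assumes hol: "g holomorphic_on ball 0 1" and bd: "\<And>z. z \<in> ball 0 1 \<Longrightarrow> norm (g z) \<le> 1"
  shows "(\<exists>c. norm c = 1 \<and> (\<forall>z\<in>ball 0 1. g z = c)) \<or> (\<forall>z\<in>ball 0 1. norm (g z) < 1)"
proof (cases "\<exists>\<xi>\<in>ball 0 1. norm (g \<xi>) = 1")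
  case True
  then obtain \<xi> where xi: "\<xi> \<in> ball 0 1" "norm (g \<xi>) = 1" by blast
  have "g constant_on ball 0 1"
    by (rule maximum_modulus_principle[OF hol _ _ _ subset_refl xi(1)]) (use bd xi in auto)
  then obtain c where c: "\<forall>z\<in>ball 0 1. g z = c" unfolding constant_on_def by blast
  then have "norm c = 1" using xi by auto
  then show ?thesis using c by blast
next
  case False
  then show ?thesis using bd by (meson less_le)
qed

lemma fps_exp_hol:
  assumes "g holomorphic_on ball 0 r" "r > 0"
  shows "g has_fps_expansion fps_expansion g 0"
proof -
  have "g analytic_on ball 0 r" using assms by (simp add: analytic_on_open)
  hence "g analytic_on {0}" using analytic_on_subset[of g "ball 0 r" "{0}"] assms by auto
  thus ?thesis by (rule analytic_at_imp_has_fps_expansion_0)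
qed

lemma fps_exp_nth01:
  fixes g :: "complex \<Rightarrow> complex"
  assumes "g has_fps_expansion G"
  shows "fps_nth G 0 = g 0" "fps_nth G 1 = deriv g 0"
  using fps_nth_fps_expansion[OF assms, of 0] fps_nth_fps_expansion[OF assms, of 1] by simp_all

lemma schwarz_pick0:
  assumes hol: "g holomorphic_on ball 0 1" and bd: "\<And>z. z \<in> ball 0 1 \<Longrightarrow> norm (g z) \<le> 1"
  shows "norm (deriv g 0) \<le> 1 - norm (g 0)^2"
  using bounded_dichotomy[OF hol bd]
proof
  assume "\<exists>c. norm c = 1 \<and> (\<forall>z\<in>ball 0 1. g z = c)"
  then obtain c where c: "norm c = 1" "\<forall>z\<in>ball 0 1. g z = c" by blast
  have "eventually (\<lambda>z. g z = c) (nhds 0)"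
    using c(2) by (intro eventually_nhds_in_open[THEN eventually_mono, of "ball 0 1"]) auto
  hence "deriv g 0 = deriv (\<lambda>_. c) 0" by (rule deriv_cong_ev) simp
  thus ?thesis using c by simp
next
  assume lt: "\<forall>z\<in>ball 0 1. norm (g z) < 1"
  define a where "a = g 0"
  have a1: "norm a < 1" using lt by (simp add: a_def)
  define \<phi> where "\<phi> = (\<lambda>z. (g z - a) / (1 - cnj a * g z))"
  have den: "1 - cnj a * g z \<noteq> 0" if "z \<in> ball 0 1" for z
  proof -
    have "norm (g z) \<le> 1" using lt that by (simp add: less_imp_le)
    hence "norm (cnj a * g z) \<le> norm a" by (simp add: norm_mult mult_left_le)
    hence "norm (cnj a * g z) < 1" using a1 by linarith
    thus ?thesis by auto
  qed
  have holphi: "\<phi> holomorphic_on ball 0 1" unfolding \<phi>_def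
    using den by (intro holomorphic_intros hol) auto
  have phi0: "\<phi> 0 = 0" by (simp add: \<phi>_def a_def)
  have phin: "norm (\<phi> z) < 1" if "norm z < 1" for z
    unfolding \<phi>_def using mobius_norm[OF a1, of "g z"] lt that by auto
  have "norm (deriv \<phi> 0) \<le> 1" using Schwarz_Lemma(2)[OF holphi phi0 phin, of 0] by simp
  moreover have "deriv \<phi> 0 = deriv g 0 / (1 - cnj a * a)"
  proof -
    have gd: "(g has_field_derivative deriv g 0) (at 0)"
      using hol by (intro holomorphic_derivI[of _ "ball 0 1"]) auto
    have "(\<phi> has_field_derivative ((deriv g 0 * (1 - cnj a * g 0) - (g 0 - a) * (- (cnj a * deriv g 0))) / (1 - cnj a * g 0)^2)) (at 0)"
      unfolding \<phi>_def using den[of 0]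
      by (auto intro!: derivative_eq_intros gd simp: power2_eq_square)
    hence "deriv \<phi> 0 = (deriv g 0 * (1 - cnj a * g 0) - (g 0 - a) * (- (cnj a * deriv g 0))) / (1 - cnj a * g 0)^2"
      by (rule DERIV_imp_deriv)
    also have "\<dots> = deriv g 0 / (1 - cnj a * a)" using den[of 0] by (simp add: a_def power2_eq_square)
    finally show ?thesis .
  qed
  moreover have "cnj a * a = of_real (norm a ^2)" by (simp only: complex_norm_square mult.commute)
  moreover have pos: "1 - norm a^2 > 0" using a1 by (simp add: abs_square_less_1)
  moreover have "norm (1 - (complex_of_real (norm a))^2) = 1 - norm a^2"
  proof -
    have "1 - (complex_of_real (norm a))^2 = complex_of_real (1 - norm a^2)" by simp
    thus ?thesis using pos by (simp only: norm_of_real)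
  qed
  ultimately have "norm (deriv g 0) / (1 - norm a^2) \<le> 1"
    by (simp add: norm_divide)
  thus ?thesis using pos by (simp add: a_def divide_le_eq)
qed
lemma eq_fps_ball:
  fixes f g :: "complex \<Rightarrow> complex"
  assumes "\<And>z. z \<in> ball 0 1 \<Longrightarrow> f z = g z" "f has_fps_expansion F" "g has_fps_expansion G"
  shows "F = G"
proof -
  have ev: "eventually (\<lambda>z. f z = g z) (nhds 0)"
    using assms(1) by (intro eventually_nhds_in_open[THEN eventually_mono, of "ball 0 1"]) auto
  have "g has_fps_expansion F" using has_fps_expansion_cong[OF ev, of F F] assms(2) by simp
  thus ?thesis using fps_expansion_unique_complex assms(3) by blast
qed

lemma schwarz_pick2:
  fixes g :: "complex \<Rightarrow> complex"
  assumes hol: "g holomorphic_on ball 0 1" and bd: "\<And>z. z \<in> ball 0 1 \<Longrightarrow> norm (g z) \<le> 1"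
    and Gexp: "g has_fps_expansion G"
  shows "norm (fps_nth G 2) \<le> 1 - norm (fps_nth G 0)^2 - norm (fps_nth G 1)^2 / (1 + norm (fps_nth G 0))"
  using bounded_dichotomy[OF hol bd]
proof
  assume "\<exists>c. norm c = 1 \<and> (\<forall>z\<in>ball 0 1. g z = c)"
  then obtain c where c: "norm c = 1" "\<forall>z\<in>ball 0 1. g z = c" by blast
  have "G = fps_const c" by (rule eq_fps_ball[OF _ Gexp, of "\<lambda>_. c"]) (use c in auto)
  thus ?thesis using c by simp
next
  assume lt: "\<forall>z\<in>ball 0 1. norm (g z) < 1"
  define a where "a = g 0"
  have a1: "norm a < 1" using lt by (simp add: a_def)
  have Ga: "fps_nth G 0 = a" using fps_exp_nth01(1)[OF Gexp] by (simp add: a_def)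
  define \<phi> where "\<phi> = (\<lambda>z. (g z - a) / (1 - cnj a * g z))"
  have den: "1 - cnj a * g z \<noteq> 0" if "z \<in> ball 0 1" for z
  proof -
    have "norm (g z) \<le> 1" using lt that by (simp add: less_imp_le)
    hence "norm (cnj a * g z) \<le> norm a" by (simp add: norm_mult mult_left_le)
    hence "norm (cnj a * g z) < 1" using a1 by linarith
    thus ?thesis by auto
  qed
  have holphi: "\<phi> holomorphic_on ball 0 1" unfolding \<phi>_def
    using den by (intro holomorphic_intros hol) auto
  have phi0: "\<phi> 0 = 0" by (simp add: \<phi>_def a_def)
  have phin: "norm (\<phi> z) < 1" if "norm z < 1" for z
    unfolding \<phi>_def using mobius_norm[OF a1, of "g z"] lt that by auto
  obtain \<psi> where holpsi: "\<psi> holomorphic_on ball 0 1" and phipsi: "\<And>z. norm z < 1 \<Longrightarrow> \<phi> z = z * \<psi> z"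
    and psi0: "deriv \<phi> 0 = \<psi> 0"
    using Schwarz3[OF holphi phi0] by blast
  have psibd: "norm (\<psi> z) \<le> 1" if "z \<in> ball 0 1" for z
  proof (cases "z = 0")
    case True
    then show ?thesis using Schwarz_Lemma(2)[OF holphi phi0 phin, of 0] psi0 by simp
  next
    case False
    have "norm (\<phi> z) \<le> norm z" using Schwarz_Lemma(1)[OF holphi phi0 phin, of z] that by simp
    hence "norm z * norm (\<psi> z) \<le> norm z * 1" using phipsi[of z] that by (simp add: norm_mult)
    thus ?thesis using False by (simp add: mult_le_cancel_left)
  qed
  have pick: "norm (deriv \<psi> 0) \<le> 1 - norm (\<psi> 0)^2" by (rule schwarz_pick0[OF holpsi psibd])
  define \<Phi> where "\<Phi> = fps_expansion \<phi> 0"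
  define \<Psi> where "\<Psi> = fps_expansion \<psi> 0"
  have Phiexp: "\<phi> has_fps_expansion \<Phi>" unfolding \<Phi>_def by (rule fps_exp_hol[OF holphi]) simp
  have Psiexp: "\<psi> has_fps_expansion \<Psi>" unfolding \<Psi>_def by (rule fps_exp_hol[OF holpsi]) simp
  have "(\<lambda>z. z * \<psi> z) has_fps_expansion fps_X * \<Psi>" by (intro fps_expansion_intros Psiexp)
  hence PP: "\<Phi> = fps_X * \<Psi>" by (intro eq_fps_ball[OF _ Phiexp]) (use phipsi in auto)
  have "(\<lambda>z. \<phi> z * (1 - cnj a * g z)) has_fps_expansion \<Phi> * (1 - fps_const (cnj a) * G)"
    by (intro fps_expansion_intros Phiexp Gexp)
  moreover have "(\<lambda>z. g z - a) has_fps_expansion G - fps_const a"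
    by (intro fps_expansion_intros Gexp)
  moreover have "\<And>z. z \<in> ball 0 1 \<Longrightarrow> \<phi> z * (1 - cnj a * g z) = g z - a"
    using den by (simp add: \<phi>_def)
  ultimately have GP: "\<Phi> * (1 - fps_const (cnj a) * G) = G - fps_const a"
    by (intro eq_fps_ball)
  have P0: "fps_nth \<Phi> 0 = 0" using PP by simp
  have P1: "fps_nth \<Phi> 1 = \<psi> 0" using PP fps_exp_nth01(1)[OF Psiexp] by (simp add: fps_X_mult_nth)
  have P2: "fps_nth \<Phi> 2 = deriv \<psi> 0" using PP fps_exp_nth01(2)[OF Psiexp] by (simp add: fps_X_mult_nth)
  have e1: "fps_nth G 1 = fps_nth \<Phi> 1 * (1 - cnj a * a)"
    using arg_cong[OF GP, of "\<lambda>F. fps_nth F 1"] P0 Ga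
    by (simp add: fps_mult_nth numeral_2_eq_2 atLeast0AtMost)
  have e2: "fps_nth G 2 = fps_nth \<Phi> 1 * (- cnj a * fps_nth G 1) + fps_nth \<Phi> 2 * (1 - cnj a * a)"
    using arg_cong[OF GP, of "\<lambda>F. fps_nth F 2"] P0 Ga
    by (simp add: fps_mult_nth numeral_2_eq_2 atLeast0AtMost)
  define u where "u = \<psi> 0"
  define v where "v = deriv \<psi> 0"
  define s where "s = 1 - norm a ^ 2"
  have s0: "s > 0" using a1 by (simp add: s_def abs_square_less_1)
  have caa: "1 - cnj a * a = of_real s" unfolding s_def
  proof -
    have "cnj a * a = of_real (norm a ^2)" by (simp only: complex_norm_square mult.commute)
    thus "1 - cnj a * a = complex_of_real (1 - norm a^2)" by simp
  qed
  have b1: "fps_nth G 1 = u * of_real s" using e1 P1 caa by (simp add: u_def)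
  have b2: "fps_nth G 2 = v * of_real s - cnj a * u^2 * of_real s"
  proof -
    have "fps_nth G 2 = u * (- cnj a * (u * of_real s)) + v * (1 - cnj a * a)"
      using e2 unfolding P1 P2 b1 u_def v_def .
    also have "\<dots> = u * (- cnj a * (u * of_real s)) + v * of_real s" by (simp only: caa)
    finally show ?thesis by (simp add: power2_eq_square algebra_simps)
  qed
  have pv: "norm v \<le> 1 - norm u ^2" using pick by (simp add: u_def v_def)
  have "norm (fps_nth G 2) \<le> norm v * s + norm a * norm u ^2 * s"
    unfolding b2 using s0 norm_triangle_ineq4[of "v * of_real s" "cnj a * u^2 * of_real s"]
    by (simp add: norm_mult norm_power)
  also have "\<dots> \<le> (1 - norm u^2) * s + norm a * norm u ^2 * s"
    using pv s0 by (simp add: mult_right_mono)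
  also have "\<dots> = s - norm u^2 * s * (1 - norm a)" by (simp add: algebra_simps)
  also have "norm u^2 * s * (1 - norm a) = norm (fps_nth G 1)^2 / (1 + norm (fps_nth G 0))"
  proof -
    have "norm (fps_nth G 1)^2 = norm u^2 * s^2" unfolding b1 using s0 by (simp add: norm_mult power_mult_distrib)
    moreover have "s = (1 - norm a) * (1 + norm a)" by (simp add: s_def algebra_simps power2_eq_square)
    moreover have "1 + norm a > 0" by (simp add: add_pos_nonneg)
    ultimately have "norm (fps_nth G 1)^2 / (1 + norm a) = norm u^2 * s * (1 - norm a) * ((1 + norm a) / (1 + norm a))"
      by (simp add: power2_eq_square mult_ac)
    also have "\<dots> = norm u^2 * s * (1 - norm a)" using \<open>1 + norm a > 0\<close> by simp
    finally show ?thesis using Ga by simp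
  qed
  finally show ?thesis using Ga by (simp add: s_def)
qed


lemma eq_fps_open:
  fixes f g :: "complex \<Rightarrow> complex"
  assumes "open S" "0 \<in> S" "\<And>z. z \<in> S \<Longrightarrow> f z = g z" "f has_fps_expansion F" "g has_fps_expansion G"
  shows "F = G"
proof -
  have ev: "eventually (\<lambda>z. f z = g z) (nhds 0)"
    using assms(1-3) by (intro eventually_nhds_in_open[THEN eventually_mono, of S]) auto
  have "g has_fps_expansion F" using has_fps_expansion_cong[OF ev, of F F] assms(4) by simp
  thus ?thesis using fps_expansion_unique_complex assms(5) by blast
qed

lemma logcoeff_formula:
  fixes f :: "complex \<Rightarrow> complex"
  assumes cA: "classA f"
  defines "A \<equiv> fps_expansion f 0"
  shows "H21 f = (fps_nth A 2 * fps_nth A 4 - (fps_nth A 3)^2 + (fps_nth A 2)^4/12)/4"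
proof -
  have hol: "f holomorphic_on ball 0 1" and f0: "f 0 = 0" and df0: "deriv f 0 = 1"
    using cA by (auto simp: classA_def)
  have Aexp: "f has_fps_expansion A" unfolding A_def by (rule fps_exp_hol[OF hol]) simp
  have A0: "fps_nth A 0 = 0" and A1: "fps_nth A 1 = 1"
    using fps_exp_nth01[OF Aexp] f0 df0 by simp_all
  have Anz: "A \<noteq> 0" using A1 by auto
  have sub: "1 \<le> subdegree A" by (rule subdegree_geI[OF Anz]) (use A0 in auto)
  define q where "q = (\<lambda>z::complex. if z = 0 then 1 else f z / z)"
  define Q where "Q = fps_shift 1 A"
  have "(\<lambda>x. if x = 0 then fps_nth A 1 else f x / x ^ 1) has_fps_expansion fps_shift 1 A"
    by (rule has_fps_expansion_shift[OF Aexp sub refl])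
  hence Qexp: "q has_fps_expansion Q" unfolding q_def Q_def A1 by (simp only: power_one_right)
  obtain s where s: "open s" "0 \<in> s" "q holomorphic_on s"
    using has_fps_expansion_imp_holomorphic[OF Qexp] by blast
  define s2 where "s2 = s \<inter> q -` ball 1 1"
  have q0: "q 0 = 1" by (simp add: q_def)
  have s2open: "open s2" unfolding s2_def
    by (rule continuous_open_preimage) (use s holomorphic_on_imp_continuous_on in auto)
  have s2_0: "0 \<in> s2" unfolding s2_def using s q0 by simp
  have notneg: "q z \<notin> \<real>\<^sub>\<le>\<^sub>0" if "z \<in> s2" for z
  proof -
    have "dist 1 (q z) < 1" using that by (simp add: s2_def)
    hence "Re (q z) > 0" using complex_Re_le_cmod[of "1 - q z"] by (simp add: dist_norm)
    thus ?thesis by (auto simp: complex_nonpos_Reals_iff)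
  qed
  have holq2: "q holomorphic_on s2" using s(3) by (rule holomorphic_on_subset) (auto simp: s2_def)
  define L where "L = (\<lambda>z. Ln (q z))"
  have holL: "L holomorphic_on s2" unfolding L_def using notneg holq2 by (intro holomorphic_intros) auto
  define LF where "LF = fps_expansion L 0"
  have Lexp: "L has_fps_expansion LF"
  proof -
    have "L analytic_on s2" using holL s2open by (simp add: analytic_on_open)
    hence "L analytic_on {0}" using analytic_on_subset[of L s2 "{0}"] s2_0 by auto
    thus ?thesis unfolding LF_def by (rule analytic_at_imp_has_fps_expansion_0)
  qed
  have dL: "deriv L z * q z = deriv q z" if "z \<in> s2" for z
  proof -
    have qd: "(q has_field_derivative deriv q z) (at z)"
      using holq2 s2open that by (intro holomorphic_derivI[of _ s2]) auto
    have "(L has_field_derivative inverse (q z) * deriv q z) (at z)"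
      unfolding L_def using has_field_derivative_Ln[OF notneg[OF that]] qd
      by (rule DERIV_chain2)
    hence "deriv L z = inverse (q z) * deriv q z" by (rule DERIV_imp_deriv)
    moreover have "q z \<noteq> 0" using notneg[OF that] by auto
    ultimately show ?thesis by (simp add: field_simps)
  qed
  have "(\<lambda>z. deriv L z * q z) has_fps_expansion fps_deriv LF * Q"
    by (intro fps_expansion_intros Lexp Qexp)
  moreover have "deriv q has_fps_expansion fps_deriv Q" by (intro fps_expansion_intros Qexp)
  ultimately have DE: "fps_deriv LF * Q = fps_deriv Q"
    by (intro eq_fps_open[OF s2open s2_0, of "\<lambda>z. deriv L z * q z" "deriv q"]) (use dL in auto)
  have LF0: "fps_nth LF 0 = 0" using fps_exp_nth01(1)[OF Lexp] q0 by (simp add: L_def)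
  have lc: "logcoeff f n = fps_nth LF n / 2" for n
    using fps_nth_fps_expansion[OF Lexp, of n] unfolding logcoeff_def L_def q_def by simp
  have Qn: "fps_nth Q n = fps_nth A (Suc n)" for n by (simp add: Q_def)
  have c0: "fps_nth LF 1 = fps_nth A 2"
    using arg_cong[OF DE, of "\<lambda>F. fps_nth F 0"] Qn[of 0] Qn[of 1] A1
    by (simp add: fps_mult_nth numeral_2_eq_2)
  have c1: "fps_nth LF 1 * fps_nth A 2 + 2 * fps_nth LF 2 = 2 * fps_nth A 3"
    using arg_cong[OF DE, of "\<lambda>F. fps_nth F 1"] Qn[of 0] Qn[of 1] Qn[of 2] A1
    by (simp add: fps_mult_nth numeral_2_eq_2 numeral_3_eq_3 atLeast0AtMost)
  have c2: "fps_nth LF 1 * fps_nth A 3 + 2 * fps_nth LF 2 * fps_nth A 2 + 3 * fps_nth LF 3 = 3 * fps_nth A 4"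
    using arg_cong[OF DE, of "\<lambda>F. fps_nth F 2"] Qn[of 0] Qn[of 1] Qn[of 2] Qn[of 3] A1
    by (simp add: fps_mult_nth numeral_2_eq_2 numeral_3_eq_3 eval_nat_numeral atLeast0AtMost)
  have l2: "fps_nth LF 2 = fps_nth A 3 - (fps_nth A 2)^2/2" using c0 c1 by (simp add: field_simps power2_eq_square)
  have l3: "fps_nth LF 3 = fps_nth A 4 - fps_nth A 2 * fps_nth A 3 + (fps_nth A 2)^3/3"
  proof -
    have "2 * (3 * fps_nth LF 3) = 2 * (3 * fps_nth A 4 - 3 * fps_nth A 2 * fps_nth A 3 + (fps_nth A 2)^3)"
      using c2 c0 l2 by (simp add: field_simps power2_eq_square power3_eq_cube)
    hence "3 * fps_nth LF 3 = 3 * fps_nth A 4 - 3 * fps_nth A 2 * fps_nth A 3 + (fps_nth A 2)^3"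
      by (simp only: mult_cancel_left) simp
    thus ?thesis by (simp add: field_simps)
  qed
  show ?thesis unfolding H21_def lc c0 l2 l3
    by (simp add: field_simps power2_eq_square power3_eq_cube power4_eq_xxxx)
qed


lemma complex_ineq:
  fixes b0 b1 b2 :: complex
  assumes h0: "norm b0 \<le> 1" and h1: "norm b1 \<le> 1 - norm b0^2"
    and h2: "norm b2 \<le> 1 - norm b0^2 - norm b1^2/(1 + norm b0)"
  shows "norm (b0*b2/2 + b0^2*b1/9 + 5*b0^4/36 + b0^2/18 - 4*b1^2/9 - 4*b1/9 - 1/9) \<le> 1"
proof -
  have "norm (b0*b2/2 + b0^2*b1/9 + 5*b0^4/36 + b0^2/18 - 4*b1^2/9 - 4*b1/9 - 1/9)
      \<le> norm (b0*b2/2) + norm (b0^2*b1/9) + norm (5*b0^4/36) + norm (b0^2/18) + norm (4*b1^2/9) + norm (4*b1/9) + norm (1/9::complex)"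
    by (smt (verit) norm_triangle_ineq norm_triangle_ineq4)
  also have "\<dots> = norm b0 * norm b2/2 + norm b0^2*norm b1/9 + 5*norm b0^4/36 + norm b0^2/18 + 4*norm b1^2/9 + 4*norm b1/9 + 1/9"
    by (simp add: norm_mult norm_divide norm_power)
  also have "\<dots> \<le> 1"
    by (rule real_ineq) (use h0 h1 h2 in auto)
  finally show ?thesis .
qed

lemma schwarz_quot:
  assumes holphi: "\<phi> holomorphic_on ball 0 1" and phi0: "\<phi> 0 = 0"
    and phin: "\<And>z. norm z < 1 \<Longrightarrow> norm (\<phi> z) < 1"
  obtains \<psi> where "\<psi> holomorphic_on ball 0 1" "\<And>z. norm z < 1 \<Longrightarrow> \<phi> z = z * \<psi> z"
    "\<And>z. z \<in> ball 0 1 \<Longrightarrow> norm (\<psi> z) \<le> 1"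
proof -
  obtain \<psi> where holpsi: "\<psi> holomorphic_on ball 0 1" and phipsi: "\<And>z. norm z < 1 \<Longrightarrow> \<phi> z = z * \<psi> z"
    and psi0: "deriv \<phi> 0 = \<psi> 0"
    using Schwarz3[OF holphi phi0] by blast
  have psibd: "norm (\<psi> z) \<le> 1" if "z \<in> ball 0 1" for z
  proof (cases "z = 0")
    case True
    then show ?thesis using Schwarz_Lemma(2)[OF holphi phi0 phin, of 0] psi0 by simp
  next
    case False
    have "norm (\<phi> z) \<le> norm z" using Schwarz_Lemma(1)[OF holphi phi0 phin, of z] that by simp
    hence "norm z * norm (\<psi> z) \<le> norm z * 1" using phipsi[of z] that by (simp add: norm_mult)
    thus ?thesis using False by (simp add: mult_le_cancel_left)
  qed
  show ?thesis using that holpsi phipsi psibd by blast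
qed

lemma cayley_norm:
  fixes p :: complex
  assumes "Re p > 0"
  shows "norm ((p - 1) / (p + 1)) < 1"
proof -
  have e1: "norm (p - 1)^2 = (Re p - 1)^2 + (Im p)^2" by (simp add: cmod_power2)
  have e2: "norm (p + 1)^2 = (Re p + 1)^2 + (Im p)^2" by (simp add: cmod_power2)
  have "(Re p - 1)^2 + (Im p)^2 < (Re p + 1)^2 + (Im p)^2" using assms by (simp add: power2_eq_square algebra_simps)
  hence "norm (p - 1)^2 < norm (p + 1)^2" unfolding e1 e2 .
  hence "norm (p - 1) < norm (p + 1)" using power2_less_imp_less by fastforce
  moreover have "p + 1 \<noteq> 0"
  proof
    assume "p + 1 = 0"
    hence "Re (p + 1) = 0" by simp
    thus False using assms by simp
  qed
  ultimately show ?thesis by (simp add: norm_divide divide_less_eq)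
qed

lemma main_bound:
  fixes f :: "complex \<Rightarrow> complex"
  assumes F2: "classF2 f"
  defines "A \<equiv> fps_expansion f 0"
  shows "norm (fps_nth A 2 * fps_nth A 4 - (fps_nth A 3)^2 + (fps_nth A 2)^4/12) \<le> 1"
proof -
  have hol: "f holomorphic_on ball 0 1" and f0: "f 0 = 0" and df0: "deriv f 0 = 1"
    and re: "\<And>z. z \<in> ball 0 1 \<Longrightarrow> Re ((1 - z^2) * deriv f z) > 0"
    using F2 by (auto simp: classF2_def classA_def)
  have Aexp: "f has_fps_expansion A" unfolding A_def by (rule fps_exp_hol[OF hol]) simp
  have A1: "fps_nth A 1 = 1" using fps_exp_nth01[OF Aexp] df0 by simp
  define p where "p = (\<lambda>z. (1 - z^2) * deriv f z)"
  have holp: "p holomorphic_on ball 0 1" unfolding p_def by (intro holomorphic_intros hol) auto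
  have pnz: "p z + 1 \<noteq> 0" if "z \<in> ball 0 1" for z
  proof
    assume "p z + 1 = 0"
    hence "Re (p z + 1) = 0" by simp
    thus False using re[OF that] by (simp add: p_def)
  qed
  define w where "w = (\<lambda>z. (p z - 1) / (p z + 1))"
  have holw: "w holomorphic_on ball 0 1" unfolding w_def using pnz by (intro holomorphic_intros holp) auto
  have w0: "w 0 = 0" by (simp add: w_def p_def df0)
  have wn: "norm (w z) < 1" if "norm z < 1" for z
    unfolding w_def using cayley_norm re[of z] that by (simp add: p_def)
  obtain \<omega> where holo: "\<omega> holomorphic_on ball 0 1" and wo: "\<And>z. norm z < 1 \<Longrightarrow> w z = z * \<omega> z"
    and obd: "\<And>z. z \<in> ball 0 1 \<Longrightarrow> norm (\<omega> z) \<le> 1"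
    using schwarz_quot[OF holw w0 wn] by blast
  define \<Omega> where "\<Omega> = fps_expansion \<omega> 0"
  have Oexp: "\<omega> has_fps_expansion \<Omega>" unfolding \<Omega>_def by (rule fps_exp_hol[OF holo]) simp
  define W where "W = fps_expansion w 0"
  have Wexp: "w has_fps_expansion W" unfolding W_def by (rule fps_exp_hol[OF holw]) simp
  define P where "P = fps_expansion p 0"
  have Pexp: "p has_fps_expansion P" unfolding P_def by (rule fps_exp_hol[OF holp]) simp
  have h0: "norm (fps_nth \<Omega> 0) \<le> 1" using obd[of 0] fps_exp_nth01[OF Oexp] by simp
  have h1: "norm (fps_nth \<Omega> 1) \<le> 1 - norm (fps_nth \<Omega> 0)^2"
    using schwarz_pick0[OF holo obd] fps_exp_nth01[OF Oexp] by simp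
  have h2: "norm (fps_nth \<Omega> 2) \<le> 1 - norm (fps_nth \<Omega> 0)^2 - norm (fps_nth \<Omega> 1)^2 / (1 + norm (fps_nth \<Omega> 0))"
    by (rule schwarz_pick2[OF holo obd Oexp])
  have "(\<lambda>z. z * \<omega> z) has_fps_expansion fps_X * \<Omega>" by (intro fps_expansion_intros Oexp)
  hence WO: "W = fps_X * \<Omega>" by (intro eq_fps_ball[OF _ Wexp]) (use wo in auto)
  have "(\<lambda>z. p z * (1 - w z)) has_fps_expansion P * (1 - W)" by (intro fps_expansion_intros Pexp Wexp)
  moreover have "(\<lambda>z. 1 + w z) has_fps_expansion 1 + W" by (intro fps_expansion_intros Wexp)
  moreover have "\<And>z. z \<in> ball 0 1 \<Longrightarrow> p z * (1 - w z) = 1 + w z"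
    using pnz by (simp add: w_def field_simps)
  ultimately have PW: "P * (1 - W) = 1 + W" by (intro eq_fps_ball)
  have "(\<lambda>z. (1 - z^2) * deriv f z) has_fps_expansion (1 - fps_X^2) * fps_deriv A"
    by (intro fps_expansion_intros Aexp)
  hence PA: "P = (1 - fps_X^2) * fps_deriv A" using fps_expansion_unique_complex Pexp unfolding p_def by blast
  define b0 where "b0 = fps_nth \<Omega> 0"
  define b1 where "b1 = fps_nth \<Omega> 1"
  define b2 where "b2 = fps_nth \<Omega> 2"
  have W0: "fps_nth W 0 = 0" and W1: "fps_nth W 1 = b0" and W2: "fps_nth W 2 = b1" and W3: "fps_nth W 3 = b2"
    using WO by (simp_all add: fps_X_mult_nth b0_def b1_def b2_def numeral_2_eq_2 numeral_3_eq_3)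
  have p0: "fps_nth P 0 = 1"
    using arg_cong[OF PW, of "\<lambda>F. fps_nth F 0"] W0 by simp
  have p1: "fps_nth P 1 = 2 * b0"
    using arg_cong[OF PW, of "\<lambda>F. fps_nth F 1"] W0 W1 p0 by (simp add: fps_mult_nth atLeast0AtMost)
  have p2: "fps_nth P 2 = 2 * b1 + 2 * b0^2"
    using arg_cong[OF PW, of "\<lambda>F. fps_nth F 2"] W0 W1 W2 p0 p1
    by (simp add: fps_mult_nth atLeast0AtMost numeral_2_eq_2 power2_eq_square algebra_simps)
  have p3: "fps_nth P 3 = 2 * b2 + 4 * b0 * b1 + 2 * b0^3"
    using arg_cong[OF PW, of "\<lambda>F. fps_nth F 3"] W0 W1 W2 W3 p0 p1 p2
    by (simp add: fps_mult_nth atLeast0AtMost numeral_2_eq_2 numeral_3_eq_3 power2_eq_square power3_eq_cube algebra_simps)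
  have q1: "fps_nth P 1 = 2 * fps_nth A 2"
    unfolding PA by (simp add: fps_mult_nth atLeast0AtMost numeral_2_eq_2 fps_X_power_mult_nth)
  have q2: "fps_nth P 2 = 3 * fps_nth A 3 - 1"
    unfolding PA using A1 by (simp add: algebra_simps fps_X_power_mult_nth numeral_2_eq_2 numeral_3_eq_3)
  have q3: "fps_nth P 3 = 4 * fps_nth A 4 - 2 * fps_nth A 2"
    unfolding PA by (simp add: algebra_simps fps_X_power_mult_nth numeral_2_eq_2 numeral_3_eq_3 eval_nat_numeral)
  have a2: "fps_nth A 2 = b0" using p1 q1 by simp
  have a3: "fps_nth A 3 = (2 * b1 + 2 * b0^2 + 1) / 3" using p2 q2 by (simp add: field_simps)
  have a4: "fps_nth A 4 = (2 * b2 + 4 * b0 * b1 + 2 * b0^3 + 2 * b0) / 4" using p3 q3 a2 by (simp add: field_simps)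
  have "fps_nth A 2 * fps_nth A 4 - (fps_nth A 3)^2 + (fps_nth A 2)^4/12
      = b0*b2/2 + b0^2*b1/9 + 5*b0^4/36 + b0^2/18 - 4*b1^2/9 - 4*b1/9 - 1/9"
    unfolding a2 a3 a4 by (simp add: field_simps power2_eq_square power3_eq_cube power4_eq_xxxx)
  also have "norm \<dots> \<le> 1"
    by (rule complex_ineq) (use h0 h1 h2 in \<open>simp_all add: b0_def b1_def b2_def\<close>)
  finally show ?thesis .
qed

lemma re_cayley_pos:
  fixes u :: complex
  assumes "norm u < 1"
  shows "Re ((1 + u) / (1 - u)) > 0"
proof -
  have nz: "1 - u \<noteq> 0" using assms by auto
  have "Re u ^2 + Im u ^2 < 1" using assms by (simp add: cmod_power2[symmetric] power_less_one_iff abs_square_less_1)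
  hence num: "Re (1 + u) * Re (1 - u) + Im (1 + u) * Im (1 - u) > 0" by (simp add: power2_eq_square algebra_simps)
  have den: "cmod (1 - u) ^ 2 > 0" using nz by simp
  have "Re ((1+u)/(1-u)) = (Re (1 + u) * Re (1 - u) + Im (1 + u) * Im (1 - u)) / (cmod (1-u))^2"
    by (simp add: Re_divide cmod_power2)
  thus ?thesis using divide_pos_pos[OF num den] by simp
qed

theorem theorem2p2:
  shows "(\<forall>f. classF2 f \<longrightarrow> cmod (H21 f) \<le> 1/4) \<and>
         (\<exists>f. classF2 f \<and>
              (\<forall>z\<in>ball 0 1. (1 - z^2) * deriv f z = (1 + z^2) / (1 - z^2)) \<and>
              cmod (H21 f) = 1/4)"
proof (intro conjI allI impI)
  fix f :: "complex \<Rightarrow> complex"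
  assume F2: "classF2 f"
  hence "classA f" by (simp add: classF2_def)
  define X where "X = fps_nth (fps_expansion f 0) 2 * fps_nth (fps_expansion f 0) 4 - (fps_nth (fps_expansion f 0) 3)^2 + (fps_nth (fps_expansion f 0) 2)^4/12"
  have "H21 f = X / 4" using logcoeff_formula[OF \<open>classA f\<close>] by (simp add: X_def)
  hence "cmod (H21 f) = cmod X / 4" by (simp only: norm_divide) simp
  moreover have "cmod X \<le> 1" using main_bound[OF F2] by (simp add: X_def)
  ultimately show "cmod (H21 f) \<le> 1/4" by simp
next
  define f where "f = (\<lambda>z::complex. z / (1 - z^2))"
  have nz: "1 - z^2 \<noteq> 0" if "z \<in> ball 0 1" for z :: complex
  proof -
    have "norm (z^2) < 1" using that by (simp add: norm_power power_less_one_iff abs_square_less_1)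
    thus ?thesis by auto
  qed
  have hol: "f holomorphic_on ball 0 1" unfolding f_def using nz by (intro holomorphic_intros) auto
  have df: "deriv f z = (1 + z^2) / (1 - z^2)^2" if "z \<in> ball 0 1" for z
  proof -
    have "(f has_field_derivative ((1 * (1 - z^2) - z * (- (2 * z))) / (1 - z^2)^2)) (at z)"
      unfolding f_def using nz[OF that]
      by (auto intro!: derivative_eq_intros simp: power2_eq_square)
    hence "deriv f z = (1 * (1 - z^2) - z * (- (2 * z))) / (1 - z^2)^2" by (rule DERIV_imp_deriv)
    thus ?thesis by (simp add: power2_eq_square algebra_simps)
  qed
  have eq: "\<forall>z\<in>ball 0 1. (1 - z^2) * deriv f z = (1 + z^2) / (1 - z^2)"
  proof
    fix z :: complex assume z: "z \<in> ball 0 1"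
    have gen: "\<And>d a::complex. d \<noteq> 0 \<Longrightarrow> d * (a / d^2) = a / d" by (simp add: power2_eq_square)
    show "(1 - z^2) * deriv f z = (1 + z^2) / (1 - z^2)" unfolding df[OF z] by (rule gen[OF nz[OF z]])
  qed
  have cA: "classA f" unfolding classA_def using hol df[of 0] by (simp add: f_def)
  have F2: "classF2 f" unfolding classF2_def
  proof (intro conjI ballI cA)
    fix z :: complex assume z: "z \<in> ball 0 1"
    have "norm (z^2) < 1" using z by (simp add: norm_power power_less_one_iff abs_square_less_1)
    thus "Re ((1 - z^2) * deriv f z) > 0" using eq z re_cayley_pos by auto
  qed
  define A where "A = fps_expansion f 0"
  have Aexp: "f has_fps_expansion A" unfolding A_def by (rule fps_exp_hol[OF hol]) simp
  have "(\<lambda>z. f z * (1 - z^2)) has_fps_expansion A * (1 - fps_X^2)" by (intro fps_expansion_intros Aexp)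
  moreover have "(\<lambda>z. z) has_fps_expansion fps_X" by (intro fps_expansion_intros)
  moreover have "\<And>z. z \<in> ball 0 1 \<Longrightarrow> f z * (1 - z^2) = z" using nz by (simp add: f_def)
  ultimately have AX: "A * (1 - fps_X^2) = fps_X" by (intro eq_fps_ball)
  have A0: "fps_nth A 0 = 0" and A1: "fps_nth A 1 = 1" using fps_exp_nth01[OF Aexp] cA by (simp_all add: classA_def)
  have A2: "fps_nth A 2 = 0"
    using arg_cong[OF AX, of "\<lambda>F. fps_nth F 2"] A0 by (simp add: algebra_simps fps_X_power_mult_right_nth)
  have A3: "fps_nth A 3 = 1"
    using arg_cong[OF AX, of "\<lambda>F. fps_nth F 3"] A1 by (simp add: algebra_simps fps_X_power_mult_right_nth)
  have A4: "fps_nth A 4 = 0"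
    using arg_cong[OF AX, of "\<lambda>F. fps_nth F 4"] A2 by (simp add: algebra_simps fps_X_power_mult_right_nth)
  have "H21 f = (fps_nth A 2 * fps_nth A 4 - (fps_nth A 3)^2 + (fps_nth A 2)^4/12)/4"
    unfolding A_def by (rule logcoeff_formula[OF cA])
  also have "\<dots> = -1/4" by (simp add: A2 A3 A4)
  finally have "H21 f = -1/4" .
  hence "cmod (H21 f) = 1/4" by simp
  thus "\<exists>f. classF2 f \<and> (\<forall>z\<in>ball 0 1. (1 - z^2) * deriv f z = (1 + z^2) / (1 - z^2)) \<and> cmod (H21 f) = 1/4"
    using F2 eq by blast
qed


end
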